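(* Let $n\ge5$. There is no isomorphism preserving the structure of $\mathbb{Z}_2^n$-graded algebra between $\mathbb{O}_{n,0}$ or $\mathbb{O}_{0,n}$ and any $\mathbb{O}_{p,q}$ with $p+q=n$, $p,q\ge1$. Moreover, in the same sense of non-isomorphism: if $n=4k$, the algebras $\mathbb{O}_{n-1,1}$, $\mathbb{O}_{n-2,2}$, $\mathbb{O}_{n-4,4}$ are pairwise non-isomorphic; if $n=4k+1$, $\mathbb{O}_{n-1,1}\not\simeq\mathbb{O}_{n-2,2}$; if $n=4k+2$, the algebras $\mathbb{O}_{n-1,1}$, $\mathbb{O}_{n-2,2}$, $\mathbb{O}_{n-3,3}$ are pairwise non-isomorphic; if $n=4k+3$, $\mathbb{O}_{n-1,1}\not\simeq\mathbb{O}_{n-3,3}$.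
   Context: $\mathbb{Z}_2=\{0,1\}$. For $p+q=n\ge3$, $\mathbb{O}_{p,q}$ is the real algebra with basis $\{u_x: x\in\mathbb{Z}_2^n\}$ and product $u_x\cdot u_y=(-1)^{f(x,y)}u_{x+y}$, where $f(x,y)=\sum_{1\le i<j<k\le n}(x_ix_jy_k+x_iy_jx_k+y_ix_jx_k)+\sum_{1\le i\le j\le n}x_iy_j+\sum_{1\le i\le p}x_iy_i$. An isomorphism preserving the graded structure is an algebra isomorphism sending each homogeneous element (scalar multiple of some $u_x$) to a homogeneous element. *)

theory Defs
  imports Complex_Main
begin

text \<open>Indices of the grading group Z_2^n are modelled as functions nat => bool
  vanishing outside {0..<n} (coordinate i of the paper is coordinate i-1 here).\<close>

type_synonym idx = "nat \<Rightarrow> bool"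

definition grp :: "nat \<Rightarrow> idx set" where
  "grp n = {x. \<forall>i\<ge>n. \<not> x i}"

definition gadd :: "idx \<Rightarrow> idx \<Rightarrow> idx" where
  "gadd x y = (\<lambda>i. x i \<noteq> y i)"

text \<open>The twisting function f(x,y) for O_{p,q}, n = p + q (computed in nat; only parity matters).\<close>
definition twist :: "nat \<Rightarrow> nat \<Rightarrow> idx \<Rightarrow> idx \<Rightarrow> nat" where
  "twist n p x y =
     (\<Sum>i<n. \<Sum>j<n. \<Sum>k<n. if i < j \<and> j < k then
         of_bool (x i \<and> x j \<and> y k) + of_bool (x i \<and> y j \<and> x k) + of_bool (y i \<and> x j \<and> x k)
       else 0)
   + (\<Sum>i<n. \<Sum>j<n. if i \<le> j then of_bool (x i \<and> y j) else 0)
   + (\<Sum>i<p. of_bool (x i \<and> y i))"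

definition octc :: "nat \<Rightarrow> (idx \<Rightarrow> real) set" where
  "octc n = {a. \<forall>z. z \<notin> grp n \<longrightarrow> a z = 0}"

definition ubase :: "idx \<Rightarrow> (idx \<Rightarrow> real)" where
  "ubase x = (\<lambda>z. if z = x then 1 else 0)"

definition oct_mult :: "nat \<Rightarrow> nat \<Rightarrow> (idx \<Rightarrow> real) \<Rightarrow> (idx \<Rightarrow> real) \<Rightarrow> (idx \<Rightarrow> real)" where
  "oct_mult p q a b = (\<lambda>z. \<Sum>x\<in>grp (p+q). \<Sum>y\<in>grp (p+q).
      if gadd x y = z then (-1) ^ twist (p+q) p x y * a x * b y else 0)"

definition homogeneous :: "nat \<Rightarrow> (idx \<Rightarrow> real) \<Rightarrow> bool" where
  "homogeneous n a \<longleftrightarrow> (\<exists>c. \<exists>x\<in>grp n. a = (\<lambda>z. c * ubase x z))"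

definition graded_iso :: "nat \<Rightarrow> nat \<Rightarrow> nat \<Rightarrow> nat \<Rightarrow> ((idx \<Rightarrow> real) \<Rightarrow> (idx \<Rightarrow> real)) \<Rightarrow> bool" where
  "graded_iso p q p' q' \<phi> \<longleftrightarrow>
     p + q = p' + q' \<and>
     bij_betw \<phi> (octc (p+q)) (octc (p'+q')) \<and>
     (\<forall>a\<in>octc (p+q). \<forall>b\<in>octc (p+q). \<phi> (\<lambda>z. a z + b z) = (\<lambda>z. \<phi> a z + \<phi> b z)) \<and>
     (\<forall>c. \<forall>a\<in>octc (p+q). \<phi> (\<lambda>z. c * a z) = (\<lambda>z. c * \<phi> a z)) \<and>
     (\<forall>a\<in>octc (p+q). \<forall>b\<in>octc (p+q). \<phi> (oct_mult p q a b) = oct_mult p' q' (\<phi> a) (\<phi> b)) \<and>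
     (\<forall>a\<in>octc (p+q). homogeneous (p+q) a \<longrightarrow> homogeneous (p'+q') (\<phi> a))"

definition graded_isomorphic :: "nat \<Rightarrow> nat \<Rightarrow> nat \<Rightarrow> nat \<Rightarrow> bool" where
  "graded_isomorphic p q p' q' \<longleftrightarrow> (\<exists>\<phi>. graded_iso p q p' q' \<phi>)"

definition graded_noniso :: "nat \<Rightarrow> nat \<Rightarrow> nat \<Rightarrow> nat \<Rightarrow> bool" where
  "graded_noniso p q p' q' \<longleftrightarrow> \<not> graded_isomorphic p q p' q' \<and> \<not> graded_isomorphic p' q' p q"

end

theory Submission
  imports Defs
begin

lemma s3:
  fixes F :: "nat \<Rightarrow> nat \<Rightarrow> nat \<Rightarrow> nat"
  shows "(\<Sum>i<Suc N. \<Sum>j<Suc N. \<Sum>k<Suc N. if i<j \<and> j<k then F i j k else 0) =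
   (\<Sum>i<N. \<Sum>j<N. \<Sum>k<N. if i<j \<and> j<k then F i j k else 0) + (\<Sum>i<N. \<Sum>j<N. if i<j then F i j N else 0)"
proof -
  have a: "(\<Sum>j<Suc N. \<Sum>k<Suc N. if N<j \<and> j<k then F N j k else 0) = 0"
    by (rule sum.neutral) (auto intro!: sum.neutral)
  have b: "\<And>i. i < N \<Longrightarrow> (\<Sum>k<Suc N. if i<N \<and> N<k then F i N k else 0) = 0"
    by (rule sum.neutral) auto
  have c: "(\<Sum>i<N. \<Sum>j<Suc N. \<Sum>k<Suc N. if i<j \<and> j<k then F i j k else 0)
     = (\<Sum>i<N. \<Sum>j<N. (\<Sum>k<N. if i<j \<and> j<k then F i j k else 0) + (if i<j then F i j N else 0))"
    by (rule sum.cong[OF refl]) (simp add: b)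
  show ?thesis
    apply (subst sum.lessThan_Suc[of "\<lambda>i. \<Sum>j<Suc N. \<Sum>k<Suc N. if i<j \<and> j<k then F i j k else 0"])
    apply (simp only: a c add_0_right)
    by (simp add: sum.distrib)
qed

lemma s2:
  fixes F :: "nat \<Rightarrow> nat \<Rightarrow> nat"
  shows "(\<Sum>i<Suc N. \<Sum>j<Suc N. if i \<le> j then F i j else 0) =
   (\<Sum>i<N. \<Sum>j<N. if i \<le> j then F i j else 0) + (\<Sum>i<N. F i N) + F N N"
proof -
  have a: "(\<Sum>j<N. if Suc N \<le> j then F N j else 0) = 0" 
    by (rule sum.neutral) auto
  show ?thesis
    by (simp add: sum.distrib a)
qed

lemma s2':
  fixes F :: "nat \<Rightarrow> nat \<Rightarrow> nat"
  shows "(\<Sum>i<Suc N. \<Sum>j<Suc N. if i < j then F i j else 0) =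
   (\<Sum>i<N. \<Sum>j<N. if i < j then F i j else 0) + (\<Sum>i<N. F i N)"
proof -
  have a: "(\<Sum>j<N. if N < j then F N j else 0) = 0" 
    by (rule sum.neutral) auto
  show ?thesis
    by (simp add: sum.distrib a)
qed

definition T3 :: "nat \<Rightarrow> idx \<Rightarrow> nat" where
 "T3 n x = (\<Sum>i<n. \<Sum>j<n. \<Sum>k<n. if i<j \<and> j<k then of_bool (x i \<and> x j \<and> x k) else 0)"
definition D2 :: "nat \<Rightarrow> idx \<Rightarrow> nat" where
 "D2 n x = (\<Sum>i<n. \<Sum>j<n. if i \<le> j then of_bool (x i \<and> x j) else 0)"
definition P2 :: "nat \<Rightarrow> idx \<Rightarrow> nat" where
 "P2 n x = (\<Sum>i<n. \<Sum>j<n. if i < j then of_bool (x i \<and> x j) else 0)"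
definition W :: "nat \<Rightarrow> idx \<Rightarrow> nat" where
 "W n x = (\<Sum>i<n. of_bool (x i))"

lemma tw: "twist n p x x = 3 * T3 n x + D2 n x + (\<Sum>i<p. of_bool (x i))"
proof -
  have e: "\<And>c a::nat. (if c then a + a + a else 0) = 3 * (if c then a else 0)" by simp
  show ?thesis unfolding twist_def T3_def D2_def by (simp only: e sum_distrib_left simp_thms)
qed

lemma P2c: "P2 n x = W n x choose 2"
proof (induction n)
  case 0 then show ?case by (simp add: P2_def W_def)
next
  case (Suc n)
  have "P2 (Suc n) x = P2 n x + (if x n then W n x else 0)"
    unfolding P2_def W_def by (subst s2') (auto simp: sum.neutral intro!: sum.cong)
  then show ?case using Suc by (simp add: W_def numeral_2_eq_2)
qed

lemma T3c: "T3 n x = W n x choose 3"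
proof (induction n)
  case 0 then show ?case by (simp add: T3_def W_def)
next
  case (Suc n)
  have "T3 (Suc n) x = T3 n x + (if x n then P2 n x else 0)"
    unfolding T3_def P2_def by (subst s3) (auto simp: sum.neutral intro!: sum.cong)
  then show ?case using Suc by (simp add: W_def P2c numeral_3_eq_3 numeral_2_eq_2)
qed

lemma D2c: "D2 n x = (W n x choose 2) + W n x"
proof (induction n)
  case 0 then show ?case by (simp add: D2_def W_def)
next
  case (Suc n)
  have "D2 (Suc n) x = D2 n x + (if x n then W n x + 1 else 0)"
    unfolding D2_def W_def by (subst s2) (auto simp: sum.neutral intro!: sum.cong)
  then show ?case using Suc by (simp add: W_def numeral_2_eq_2)
qed

lemma twc: "twist n p x x = 3 * (W n x choose 3) + (W n x choose 2) + W n x + (\<Sum>i<p. of_bool (x i))"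
  by (simp add: tw T3c D2c)

lemma c2: "(-1::complex) ^ (w choose 2) = (if w mod 4 < 2 then 1 else -1)"
proof (induction w)
  case 0 then show ?case by (simp add: numeral_2_eq_2)
next
  case (Suc w)
  have e: "Suc w choose 2 = (w choose 2) + w" by (simp add: numeral_2_eq_2)
  have "w mod 4 = 0 \<or> w mod 4 = 1 \<or> w mod 4 = 2 \<or> w mod 4 = 3" by presburger
  moreover have "even w \<longleftrightarrow> w mod 4 = 0 \<or> w mod 4 = 2" by presburger
  ultimately show ?case unfolding e power_add Suc
    by (elim disjE) (simp_all add: mod_Suc)
qed

definition hh :: "nat \<Rightarrow> complex" where
  "hh w = (-1) ^ (3 * (w choose 3) + (w choose 2) + w)"

lemma hh_mod: "hh w = (if w mod 4 = 0 then 1 else -1)"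
proof (induction w)
  case 0 then show ?case by (simp add: hh_def numeral_2_eq_2 numeral_3_eq_3)
next
  case (Suc w)
  have e: "3 * (Suc w choose 3) + (Suc w choose 2) + Suc w
      = (3 * (w choose 3) + (w choose 2) + w) + 3 * (w choose 2) + w + 1"
    by (simp add: numeral_3_eq_3 numeral_2_eq_2)
  have "hh (Suc w) = hh w * ((-1) ^ (w choose 2)) ^ 3 * (-1) ^ w * (-1)"
    unfolding hh_def e power_add power_mult[symmetric] by (simp add: mult.commute)
  also have "\<dots> = (if Suc w mod 4 = 0 then 1 else -1)"
  proof -
    have "w mod 4 = 0 \<or> w mod 4 = 1 \<or> w mod 4 = 2 \<or> w mod 4 = 3" by presburger
    moreover have "even w \<longleftrightarrow> w mod 4 = 0 \<or> w mod 4 = 2" by presburger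
    ultimately show ?thesis unfolding c2 Suc
      by (elim disjE) (simp_all add: mod_Suc)
  qed
  finally show ?case .
qed

lemma ipow: "(z::complex) ^ 4 = 1 \<Longrightarrow> z ^ w = z ^ (w mod 4)"
proof -
  assume z: "z ^ 4 = 1"
  have "z ^ w = z ^ (4 * (w div 4) + w mod 4)" by simp
  also have "\<dots> = z ^ (w mod 4)" by (simp only: power_add power_mult z) simp
  finally show ?thesis .
qed

lemma hh_c: "hh w = (-1 + \<i> ^ w + (-1) ^ w + (-\<i>) ^ w) / 2"
proof -
  have a: "\<i> ^ w = \<i> ^ (w mod 4)" by (rule ipow) simp
  have b: "(-\<i>) ^ w = (-\<i>) ^ (w mod 4)" by (rule ipow) simp
  have c: "(-1::complex) ^ w = (-1) ^ (w mod 4)" by (rule ipow) simp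
  have "w mod 4 = 0 \<or> w mod 4 = 1 \<or> w mod 4 = 2 \<or> w mod 4 = 3" by presburger
  then show ?thesis unfolding hh_mod a b c
    by (elim disjE) (simp_all add: numeral_3_eq_3 numeral_2_eq_2 field_simps)
qed

lemma grp_finite: "finite (grp n)"
proof (rule finite_subset)
  show "grp n \<subseteq> (\<lambda>S i. i \<in> S) ` Pow {..<n}"
  proof
    fix x assume "x \<in> grp n"
    then have "x = (\<lambda>i. i \<in> {i. i < n \<and> x i})" by (auto simp: grp_def not_less[symmetric])
    then show "x \<in> (\<lambda>S i. i \<in> S) ` Pow {..<n}" by blast
  qed
qed simp

lemma grp_Suc: "grp (Suc n) = grp n \<union> (\<lambda>x. x(n:=True)) ` grp n"
proof (rule set_eqI, rule iffI)
  fix x assume x: "x \<in> grp (Suc n)"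
  show "x \<in> grp n \<union> (\<lambda>x. x(n:=True)) ` grp n"
  proof (cases "x n")
    case True
    then have "x = (x(n:=False))(n:=True)" by (auto simp: fun_eq_iff)
    moreover have "x(n:=False) \<in> grp n" using x by (auto simp: grp_def)
    ultimately show ?thesis by blast
  next
    case False
    have "x \<in> grp n" unfolding grp_def
    proof (intro CollectI allI impI)
      fix i assume "n \<le> i"
      then show "\<not> x i" using x False unfolding grp_def
        by (metis Suc_leI le_neq_implies_less mem_Collect_eq)
    qed
    then show ?thesis by blast
  qed
next
  fix x assume "x \<in> grp n \<union> (\<lambda>x. x(n:=True)) ` grp n"
  then show "x \<in> grp (Suc n)" by (auto simp: grp_def)
qed

lemma prodsum: "(\<Sum>x\<in>grp n. \<Prod>i<n. if x i then a i else 1) = (\<Prod>i<n. (1 + a i :: complex))"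
proof (induction n)
  case 0
  have "grp 0 = {\<lambda>i. False}" by (auto simp: grp_def)
  then show ?case by simp
next
  case (Suc n)
  let ?g = "\<lambda>x::idx. x(n:=True)"
  have dis: "grp n \<inter> ?g ` grp n = {}" by (auto simp: grp_def)
  have inj: "inj_on ?g (grp n)"
  proof (rule inj_onI)
    fix x y assume "x \<in> grp n" "y \<in> grp n" "x(n:=True) = y(n:=True)"
    then show "x = y" by (auto simp: grp_def fun_eq_iff) (metis order_refl)+
  qed
  have A: "(\<Sum>x\<in>grp n. \<Prod>i<Suc n. if x i then a i else 1) = (\<Sum>x\<in>grp n. \<Prod>i<n. if x i then a i else 1)"
    by (rule sum.cong) (auto simp: grp_def)
  have B: "(\<Sum>x\<in>?g ` grp n. \<Prod>i<Suc n. if x i then a i else 1) = (\<Sum>x\<in>grp n. (\<Prod>i<n. if x i then a i else 1) * a n)"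
    by (subst sum.reindex[OF inj]) (auto intro!: sum.cong prod.cong)
  show ?case
    unfolding grp_Suc sum.union_disjoint[OF grp_finite finite_imageI[OF grp_finite] dis] A B
    by (simp add: sum_distrib_left[symmetric] Suc algebra_simps)
qed

lemma powprod: "(t::complex) ^ (W n x) * (-1) ^ (\<Sum>i<n. of_bool (x i \<and> i < p)) =
   (\<Prod>i<n. if x i then t * (if i < p then -1 else 1) else 1)"
  by (induction n) (auto simp: W_def power_add)

lemma Wp: fixes p n :: nat shows "p \<le> n \<Longrightarrow> (\<Sum>i<p. of_bool (x i)) = (\<Sum>i<n. of_bool (x i \<and> i < p) :: nat)"
proof -
  assume "p \<le> n"
  then have "{..<n} \<inter> {i. i < p} = {..<p}" by (auto intro: less_le_trans)
  moreover have "(\<Sum>i<n. of_bool (x i \<and> i < p) :: nat) = (\<Sum>i<n. if i < p then of_bool (x i) else 0)"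
    by (rule sum.cong) auto
  moreover have "(\<Sum>i<n. if i < p then of_bool (x i) else 0) = (\<Sum>i\<in>{..<n} \<inter> {i. i < p}. of_bool (x i) :: nat)"
    by (simp only: sum.inter_restrict[OF finite_lessThan] mem_Collect_eq)
  ultimately show ?thesis by simp
qed

lemma prodval: "(\<Prod>i<n. (1 + t * (if i < p then -1 else 1) :: complex)) = (1-t)^(min n p) * (1+t)^(n-p)"
proof (induction n)
  case 0 then show ?case by simp
next
  case (Suc n)
  show ?case
  proof (cases "n < p")
    case True
    then have "min (Suc n) p = Suc (min n p)" "Suc n - p = 0" "n - p = 0" by auto
    then show ?thesis using Suc True by simp
  next
    case False
    then have "min (Suc n) p = min n p" "Suc n - p = Suc (n - p)" by auto
    then show ?thesis using Suc False by (simp add: algebra_simps)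
  qed
qed

definition sgnc :: "nat \<Rightarrow> nat \<Rightarrow> complex" where
  "sgnc n p = (\<Sum>x\<in>grp n. (-1) ^ twist n p x x)"

lemma sgnc_val: assumes "p \<le> n"
  shows "sgnc n p = (- (0^p * 2^(n-p)) + (1-\<i>)^p*(1+\<i>)^(n-p) + 2^p*0^(n-p) + (1+\<i>)^p*(1-\<i>)^(n-p)) / 2"
proof -
  define F where "F t = (\<Sum>x\<in>grp n. (t::complex) ^ W n x * (-1) ^ (\<Sum>i<n. of_bool (x i \<and> i < p)))" for t
  have Fv: "F t = (1-t)^p * (1+t)^(n-p)" for t
  proof -
    have "F t = (\<Prod>i<n. (1 + t * (if i < p then -1 else 1)))"
      unfolding F_def powprod by (rule prodsum)
    then show ?thesis using assms by (simp add: prodval min_absorb2)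
  qed
  have "sgnc n p = (\<Sum>x\<in>grp n. hh (W n x) * (-1) ^ (\<Sum>i<n. of_bool (x i \<and> i < p)))"
    unfolding sgnc_def twc hh_def Wp[OF assms] by (simp add: power_add)
  also have "\<dots> = (- F 1 + F \<i> + F (-1) + F (-\<i>)) / 2"
  proof -
    have gen: "(\<Sum>x\<in>A. (- a x + b x + c x + d x) / 2) = (- sum a A + sum b A + sum c A + sum d A) / (2::complex)"
      for A :: "idx set" and a b c d
      by (simp only: sum_divide_distrib[symmetric] sum.distrib sum_negf)
    have pt: "hh w * s = (- (1 ^ w * s) + \<i> ^ w * s + (-1) ^ w * s + (-\<i>) ^ w * s) / 2" for w s
      unfolding hh_c by (simp add: field_simps)
    show ?thesis unfolding pt F_def by (rule gen)
  qed
  finally show ?thesis unfolding Fv by simp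
qed

definition ezero :: idx where "ezero = (\<lambda>_. False)"

lemma ezero_grp: "ezero \<in> grp n" by (simp add: ezero_def grp_def)
lemma gadd_self: "gadd x x = ezero" by (simp add: gadd_def ezero_def)
lemma gadd_grp: "x \<in> grp n \<Longrightarrow> y \<in> grp n \<Longrightarrow> gadd x y \<in> grp n" by (simp add: gadd_def grp_def)
lemma twist_zero: "twist n p ezero ezero = 0" by (simp add: twist_def ezero_def)
lemma ubase_octc: "x \<in> grp n \<Longrightarrow> ubase x \<in> octc n" by (auto simp: ubase_def octc_def)
lemma sc_octc: "a \<in> octc n \<Longrightarrow> (\<lambda>z. c * a z) \<in> octc n" by (auto simp: octc_def)

lemma mult_ub:
  assumes "x \<in> grp (p+q)" "y \<in> grp (p+q)"
  shows "oct_mult p q (\<lambda>z. c * ubase x z) (\<lambda>z. d * ubase y z) =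
     (\<lambda>z. c * d * (-1) ^ twist (p+q) p x y * ubase (gadd x y) z)"
proof (rule ext)
  fix z
  have pt: "(if gadd x' y' = z then (-1) ^ twist (p+q) p x' y' * (c * ubase x x') * (d * ubase y y') else 0)
     = (if x' = x then (if y' = y then (c * d * (-1) ^ twist (p+q) p x y * ubase (gadd x y) z) else 0) else 0)"
    for x' y' by (auto simp: ubase_def)
  show "oct_mult p q (\<lambda>z. c * ubase x z) (\<lambda>z. d * ubase y z) z = c * d * (-1) ^ twist (p+q) p x y * ubase (gadd x y) z"
  proof -
    let ?K = "c * d * (-1) ^ twist (p+q) p x y * ubase (gadd x y) z"
    have inner: "(\<Sum>y'\<in>grp (p+q). if x' = x then (if y' = y then ?K else 0) else 0) = (if x' = x then ?K else 0)" for x'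
      using assms by (cases "x' = x") (simp_all add: sum.delta grp_finite)
    show ?thesis unfolding oct_mult_def pt inner using assms by (simp add: sum.delta grp_finite)
  qed
qed

lemma sgn_cases: "(-1::real) ^ k = 1 \<or> (-1::real) ^ k = -1"
  by (cases "even k") auto

lemma iso_inv:
  assumes iso: "graded_iso p q p' q' \<phi>"
  shows "sgnc (p+q) p = sgnc (p'+q') p'"
proof -
  define n where "n = p + q"
  have n': "p' + q' = n" using iso by (simp add: graded_iso_def n_def)
  have bij: "bij_betw \<phi> (octc n) (octc n)" using iso n' by (simp add: graded_iso_def n_def)
  then have inj: "inj_on \<phi> (octc n)" by (rule bij_betw_imp_inj_on)
  have scal: "\<And>c a. a \<in> octc n \<Longrightarrow> \<phi> (\<lambda>z. c * a z) = (\<lambda>z. c * \<phi> a z)"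
    using iso by (simp add: graded_iso_def n_def)
  have mul: "\<And>a b. a \<in> octc n \<Longrightarrow> b \<in> octc n \<Longrightarrow> \<phi> (oct_mult p q a b) = oct_mult p' q' (\<phi> a) (\<phi> b)"
    using iso by (simp add: graded_iso_def n_def)
  have hom: "\<And>a. a \<in> octc n \<Longrightarrow> homogeneous n a \<Longrightarrow> homogeneous n (\<phi> a)"
    using iso n' by (simp add: graded_iso_def n_def)
  have "\<forall>x\<in>grp n. \<exists>c. \<exists>y\<in>grp n. \<phi> (ubase x) = (\<lambda>z. c * ubase y z)"
  proof
    fix x assume x: "x \<in> grp n"
    have "homogeneous n (ubase x)" unfolding homogeneous_def
      by (rule exI[of _ 1], rule bexI[OF _ x]) simp
    then show "\<exists>c. \<exists>y\<in>grp n. \<phi> (ubase x) = (\<lambda>z. c * ubase y z)"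
      using hom[OF ubase_octc[OF x]] by (simp add: homogeneous_def)
  qed
  then obtain c \<sigma> where cs: "\<And>x. x \<in> grp n \<Longrightarrow> \<sigma> x \<in> grp n \<and> \<phi> (ubase x) = (\<lambda>z. c x * ubase (\<sigma> x) z)"
    by metis
  have ub1: "ubase x = (\<lambda>z. 1 * ubase x z)" for x by simp
  have zero: "\<phi> (\<lambda>z. 0) = (\<lambda>z. 0)"
    using scal[OF ubase_octc[OF ezero_grp], of 0] by simp
  have c0: "c x \<noteq> 0" if x: "x \<in> grp n" for x
  proof
    assume "c x = 0"
    then have "\<phi> (ubase x) = \<phi> (\<lambda>z. 0)" using cs[OF x] zero by simp
    then have "ubase x = (\<lambda>z. 0)"
      using inj ubase_octc[OF x] sc_octc[OF ubase_octc[OF x], of 0] by (auto dest: inj_onD)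
    then show False by (metis ubase_def zero_neq_one)
  qed
  define s where "s x = (-1::real) ^ twist n p x x" for x
  define s' where "s' x = (-1::real) ^ twist n p' x x" for x
  have key: "s x * c ezero * ubase (\<sigma> ezero) ezero = c x * c x * s' (\<sigma> x)" if x: "x \<in> grp n" for x
  proof -
    have "\<phi> (oct_mult p q (ubase x) (ubase x)) = oct_mult p' q' (\<phi> (ubase x)) (\<phi> (ubase x))"
      using mul ubase_octc[OF x] by blast
    moreover have "oct_mult p q (ubase x) (ubase x) = (\<lambda>z. s x * ubase ezero z)"
      using mult_ub[of x p q x 1 1] x by (simp add: n_def s_def gadd_self)
    moreover have "\<phi> (\<lambda>z. s x * ubase ezero z) = (\<lambda>z. s x * (c ezero * ubase (\<sigma> ezero) z))"
      using scal[OF ubase_octc[OF ezero_grp]] cs[OF ezero_grp] by simp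
    moreover have "oct_mult p' q' (\<phi> (ubase x)) (\<phi> (ubase x)) = (\<lambda>z. c x * c x * s' (\<sigma> x) * ubase ezero z)"
      using cs[OF x] mult_ub[of "\<sigma> x" p' q' "\<sigma> x" "c x" "c x"] n' by (simp add: s'_def gadd_self)
    ultimately have "(\<lambda>z. s x * (c ezero * ubase (\<sigma> ezero) z)) = (\<lambda>z. c x * c x * s' (\<sigma> x) * ubase ezero z)"
      by simp
    then show ?thesis by (metis (mono_tags) mult.assoc ubase_def mult_1_right)
  qed
  have sne: "s' y \<noteq> 0" for y using sgn_cases[of "twist n p' y y"] by (auto simp: s'_def)
  have se: "\<sigma> ezero = ezero"
  proof (rule ccontr)
    assume "\<sigma> ezero \<noteq> ezero"
    then have "c ezero * c ezero * s' (\<sigma> ezero) = 0" using key[OF ezero_grp] by (simp add: ubase_def)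
    then show False using c0[OF ezero_grp] sne by simp
  qed
  have ce: "c ezero = 1"
    using key[OF ezero_grp] c0[OF ezero_grp] se by (simp add: s_def s'_def twist_zero ubase_def)
  have ss: "s x = s' (\<sigma> x)" if x: "x \<in> grp n" for x
  proof -
    have e: "s x = c x * c x * s' (\<sigma> x)" using key[OF x] se ce by (simp add: ubase_def)
    have pos: "c x * c x > 0" using c0[OF x] by (metis linorder_neqE_linordered_idom mult_neg_neg mult_pos_pos)
    show ?thesis using sgn_cases[of "twist n p x x"] sgn_cases[of "twist n p' (\<sigma> x) (\<sigma> x)"] e pos
      unfolding s_def s'_def by (auto simp: mult_less_0_iff)
  qed
  have sinj: "inj_on \<sigma> (grp n)"
  proof (rule inj_onI)
    fix x y assume x: "x \<in> grp n" and y: "y \<in> grp n" and e: "\<sigma> x = \<sigma> y"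
    have "\<phi> (\<lambda>z. (c x / c y) * ubase y z) = (\<lambda>z. (c x / c y) * (c y * ubase (\<sigma> y) z))"
    proof -
      have py: "\<phi> (ubase y) = (\<lambda>z. c y * ubase (\<sigma> y) z)" using cs[OF y] by blast
      show ?thesis by (simp only: scal[OF ubase_octc[OF y]] py)
    qed
    also have "\<dots> = \<phi> (ubase x)"
      using cs[OF x] c0[OF y] e by (simp add: fun_eq_iff)
    finally have "\<phi> (ubase x) = \<phi> (\<lambda>z. (c x / c y) * ubase y z)" ..
    then have "ubase x = (\<lambda>z. (c x / c y) * ubase y z)"
      by (rule inj_onD[OF inj _ ubase_octc[OF x] sc_octc[OF ubase_octc[OF y]]])
    then have "ubase x x = (c x / c y) * ubase y x" by metis
    then show "x = y" by (auto simp: ubase_def split: if_splits)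
  qed
  have simg: "\<sigma> ` grp n = grp n"
    by (rule endo_inj_surj[OF grp_finite _ sinj]) (use cs in blast)
  have "(\<Sum>y\<in>grp n. s' y) = (\<Sum>x\<in>grp n. s x)"
    by (subst simg[symmetric], subst sum.reindex[OF sinj]) (simp add: ss)
  then have "of_real (\<Sum>x\<in>grp n. s x) = (of_real (\<Sum>y\<in>grp n. s' y) :: complex)" by simp
  then show ?thesis unfolding sgnc_def s_def s'_def n' n_def[symmetric] by simp
qed

lemma nonisoI: "sgnc (p+q) p \<noteq> sgnc (p'+q') p' \<Longrightarrow> graded_noniso p q p' q'"
  unfolding graded_noniso_def graded_isomorphic_def using iso_inv by metis

definition X :: "nat \<Rightarrow> nat \<Rightarrow> complex" where
  "X s t = ((1-\<i>)^s*(1+\<i>)^t + (1+\<i>)^s*(1-\<i>)^t)/2"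

lemma sgnc_mid: "1 \<le> p \<Longrightarrow> 1 \<le> q \<Longrightarrow> sgnc (p+q) p = X p q"
  by (subst sgnc_val) (auto simp: X_def power_0_left)

lemma a4: "(1+\<i>)^4 = (-4::complex)" by (simp add: complex_eq_iff numeral_eq_Suc)
lemma b4: "(1-\<i>)^4 = (-4::complex)" by (simp add: complex_eq_iff numeral_eq_Suc)

lemma X4: "X (4*k+s) t = (-4)^k * X s t"
proof -
  have A: "(1+\<i>)^(4*k+s) = (-4)^k*(1+\<i>)^s" by (simp only: power_add power_mult a4)
  have B: "(1-\<i>)^(4*k+s) = (-4)^k*(1-\<i>)^s" by (simp only: power_add power_mult b4)
  show ?thesis unfolding X_def A B by (simp add: algebra_simps)
qed

lemma Xb: "cmod (X p q) \<le> sqrt 2 ^ (p+q)"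
proof -
  have "cmod (X p q) \<le> (cmod ((1-\<i>)^p*(1+\<i>)^q) + cmod ((1+\<i>)^p*(1-\<i>)^q)) / 2"
    unfolding X_def by (simp add: norm_triangle_ineq divide_right_mono)
  also have "\<dots> = sqrt 2 ^ (p+q)"
  proof -
    have na: "cmod (1+\<i>) = sqrt 2" "cmod (1-\<i>) = sqrt 2" by (simp_all add: cmod_def)
    show ?thesis by (simp only: norm_mult norm_power na power_add) simp
  qed
  finally show ?thesis .
qed

lemma ext_far:
  assumes n: "n \<ge> 5" and e: "e = 1 \<or> e = -1"
  shows "cmod ((e * 2^n + (1-\<i>)^n + (1+\<i>)^n) / 2) > sqrt 2 ^ n"
proof -
  define r where "r = sqrt 2 ^ n"
  have r2: "r * r = 2 ^ n" unfolding r_def by (simp add: power_mult_distrib[symmetric])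
  have r0: "r \<ge> 0" unfolding r_def by simp
  have "(2::real) ^ n \<ge> 2 ^ 5" using n by (rule power_increasing) simp
  then have "r * r > 4 * 4" using r2 by simp
  then have r4: "r > 4"
  proof (rule contrapos_pp)
    assume "\<not> r > 4"
    then have "r \<le> 4" by simp
    then have "r * r \<le> 4 * 4" using r0 by (intro mult_mono) auto
    then show "\<not> r * r > 4 * 4" by simp
  qed
  have "cmod ((1-\<i>)^n + (1+\<i>)^n) \<le> cmod ((1-\<i>)^n) + cmod ((1+\<i>)^n)" by (rule norm_triangle_ineq)
  also have "\<dots> = 2 * r"
  proof -
    have na: "cmod (1+\<i>) = sqrt 2" "cmod (1-\<i>) = sqrt 2" by (simp_all add: cmod_def)
    show ?thesis by (simp only: norm_power na r_def)
  qed
  finally have b: "cmod ((1-\<i>)^n + (1+\<i>)^n) \<le> 2 * r" .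
  have c: "cmod (e * 2^n) = 2 ^ n" using e by (auto simp: norm_power)
  have "cmod (e * 2^n) - cmod ((1-\<i>)^n + (1+\<i>)^n) \<le> cmod (e * 2^n + ((1-\<i>)^n + (1+\<i>)^n))"
    by (metis norm_diff_ineq norm_minus_cancel diff_minus_eq_add)
  then have "2 ^ n - 2 * r \<le> cmod (e * 2^n + (1-\<i>)^n + (1+\<i>)^n)" using b c by (simp add: add.assoc)
  moreover have "2 ^ n - 2 * r > 2 * r"
  proof -
    have "4 * r < r * r" using r4 r0 by (intro mult_strict_right_mono) auto
    then show ?thesis using r2 by simp
  qed
  ultimately show ?thesis unfolding r_def[symmetric] by (simp add: norm_divide)
qed

lemma ext1: "n \<ge> 5 \<Longrightarrow> 1 \<le> p \<Longrightarrow> 1 \<le> q \<Longrightarrow> p + q = n \<Longrightarrow> sgnc (n+0) n \<noteq> sgnc (p+q) p"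
proof -
  assume a: "n \<ge> 5" "1 \<le> p" "1 \<le> q" "p + q = n"
  have eq: "sgnc (n+0) n = (1 * 2^n + (1-\<i>)^n + (1+\<i>)^n) / 2" using a(1) by (subst sgnc_val) auto
  have "cmod (sgnc (n+0) n) > sqrt 2 ^ n" unfolding eq by (rule ext_far[OF a(1)]) simp
  moreover have "cmod (sgnc (p+q) p) \<le> sqrt 2 ^ n" using Xb[of p q] sgnc_mid[OF a(2) a(3)] a(4) by simp
  ultimately show ?thesis by auto
qed

lemma ext2: "n \<ge> 5 \<Longrightarrow> 1 \<le> p \<Longrightarrow> 1 \<le> q \<Longrightarrow> p + q = n \<Longrightarrow> sgnc (0+n) 0 \<noteq> sgnc (p+q) p"
proof -
  assume a: "n \<ge> 5" "1 \<le> p" "1 \<le> q" "p + q = n"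
  have eq: "sgnc (0+n) 0 = ((-1) * 2^n + (1-\<i>)^n + (1+\<i>)^n) / 2" using a(1) by (subst sgnc_val) auto
  have "cmod (sgnc (0+n) 0) > sqrt 2 ^ n" unfolding eq by (rule ext_far[OF a(1)]) simp
  moreover have "cmod (sgnc (p+q) p) \<le> sqrt 2 ^ n" using Xb[of p q] sgnc_mid[OF a(2) a(3)] a(4) by simp
  ultimately show ?thesis by auto
qed

lemma Xv: "X 7 1 = 0" "X 6 2 = -16" "X 4 4 = 16" "X 4 1 = -4" "X 3 2 = 4"
  "X 5 1 = -8" "X 4 2 = 0" "X 3 3 = 8" "X 6 1 = -8" "X 4 3 = 8"
  by (simp_all add: X_def complex_eq_iff numeral_eq_Suc)

lemma V: "n = 4*k + s + t \<Longrightarrow> 1 \<le> s \<Longrightarrow> 1 \<le> t \<Longrightarrow> sgnc ((n-t)+t) (n-t) = (-4)^k * X s t"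
proof -
  assume a: "n = 4*k + s + t" "1 \<le> s" "1 \<le> t"
  then have "n - t = 4*k+s" by simp
  then show ?thesis using sgnc_mid[of "n-t" t] a X4 by simp
qed

theorem mainTheorem12:
  fixes n :: nat
  assumes "n \<ge> 5"
  shows "(\<forall>p q. p + q = n \<and> p \<ge> 1 \<and> q \<ge> 1 \<longrightarrow>
             graded_noniso n 0 p q \<and> graded_noniso 0 n p q)
       \<and> (n mod 4 = 0 \<longrightarrow>
             graded_noniso (n-1) 1 (n-2) 2 \<and> graded_noniso (n-1) 1 (n-4) 4 \<and>
             graded_noniso (n-2) 2 (n-4) 4)
       \<and> (n mod 4 = 1 \<longrightarrow> graded_noniso (n-1) 1 (n-2) 2)
       \<and> (n mod 4 = 2 \<longrightarrow>
             graded_noniso (n-1) 1 (n-2) 2 \<and> graded_noniso (n-1) 1 (n-3) 3 \<and>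
             graded_noniso (n-2) 2 (n-3) 3)
       \<and> (n mod 4 = 3 \<longrightarrow> graded_noniso (n-1) 1 (n-3) 3)"
proof (intro conjI impI allI)
  fix p q assume h: "p + q = n \<and> p \<ge> 1 \<and> q \<ge> 1"
  show "graded_noniso n 0 p q"
    using ext1[OF assms, of p q] h nonisoI[of n 0 p q] by auto
  show "graded_noniso 0 n p q"
    using ext2[OF assms, of p q] h nonisoI[of 0 n p q] by auto
next
  assume m: "n mod 4 = 0"
  define k where "k = n div 4 - 2"
  have nk: "n = 4*k + 7 + 1" "n = 4*k + 6 + 2" "n = 4*k + 4 + 4" using m assms unfolding k_def by presburger+
  have nz: "(-4::complex)^k \<noteq> 0" by simp
  note v = V[OF nk(1)] V[OF nk(2)] V[OF nk(3)]
  show "graded_noniso (n-1) 1 (n-2) 2" by (rule nonisoI) (use v Xv nz in simp)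
  show "graded_noniso (n-1) 1 (n-4) 4" by (rule nonisoI) (use v Xv nz in simp)
  show "graded_noniso (n-2) 2 (n-4) 4" by (rule nonisoI) (use v Xv nz in simp)
next
  assume m: "n mod 4 = 1"
  define k where "k = n div 4 - 1"
  have nk: "n = 4*k + 4 + 1" "n = 4*k + 3 + 2" using m assms unfolding k_def by presburger+
  have nz: "(-4::complex)^k \<noteq> 0" by simp
  note v = V[OF nk(1)] V[OF nk(2)]
  show "graded_noniso (n-1) 1 (n-2) 2" by (rule nonisoI) (use v Xv nz in simp)
next
  assume m: "n mod 4 = 2"
  define k where "k = n div 4 - 1"
  have nk: "n = 4*k + 5 + 1" "n = 4*k + 4 + 2" "n = 4*k + 3 + 3" using m assms unfolding k_def by presburger+
  have nz: "(-4::complex)^k \<noteq> 0" by simp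
  note v = V[OF nk(1)] V[OF nk(2)] V[OF nk(3)]
  show "graded_noniso (n-1) 1 (n-2) 2" by (rule nonisoI) (use v Xv nz in simp)
  show "graded_noniso (n-1) 1 (n-3) 3" by (rule nonisoI) (use v Xv nz in simp)
  show "graded_noniso (n-2) 2 (n-3) 3" by (rule nonisoI) (use v Xv nz in simp)
next
  assume m: "n mod 4 = 3"
  define k where "k = n div 4 - 1"
  have nk: "n = 4*k + 6 + 1" "n = 4*k + 4 + 3" using m assms unfolding k_def by presburger+
  have nz: "(-4::complex)^k \<noteq> 0" by simp
  note v = V[OF nk(1)] V[OF nk(2)]
  show "graded_noniso (n-1) 1 (n-3) 3" by (rule nonisoI) (use v Xv nz in simp)
qed

end
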